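(* Let $X$ be a real vector space. Then $(X,\tau_c)$ has the Heine–Borel property: every $\tau_c$-closed and $\tau_c$-bounded subset of $X$ is $\tau_c$-compact. Moreover, every $\tau_c$-compact subset of $X$ lies in some finite-dimensional subspace of $X$.
   Context: For $A\subseteq X$, $cor(A):=\{x\in A:\ \forall x'\in X\ \exists \lambda'>0 \text{ with } x+\lambda x'\in A\ \forall\lambda\in[0,\lambda']\}$. The core convex topology $\tau_c$ on $X$ is the topology whose open sets are the unions of families of convex sets $B\subseteq X$ with $cor(B)=B$; it makes $X$ a topological vector space. A set $A$ is $\tau_c$-bounded if for every $\tau_c$-neighborhood $U$ of $0$ there is $s>0$ with $A\subseteq tU$ for all $t>s$. *)

theory Defs
  imports "HOL-Analysis.Analysis"
begin

definition acore :: "'a::real_vector set \<Rightarrow> 'a set" where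
  "acore A = {x \<in> A. \<forall>x'. \<exists>l>0. \<forall>t\<in>{0..l}. x + t *\<^sub>R x' \<in> A}"

definition core_basic :: "'a::real_vector set \<Rightarrow> bool" where
  "core_basic B \<longleftrightarrow> convex B \<and> acore B = B"

definition core_open :: "'a::real_vector set \<Rightarrow> bool" where
  "core_open U \<longleftrightarrow> (\<exists>F. (\<forall>B\<in>F. core_basic B) \<and> U = \<Union>F)"

lemma acore_Int: "acore (A \<inter> B) = acore A \<inter> acore B"
proof
  show "acore (A \<inter> B) \<subseteq> acore A \<inter> acore B"
    unfolding acore_def by blast
next
  show "acore A \<inter> acore B \<subseteq> acore (A \<inter> B)"
  proof
    fix x assume x: "x \<in> acore A \<inter> acore B"
    have "\<exists>l>0. \<forall>t\<in>{0..l}. x + t *\<^sub>R x' \<in> A \<inter> B" for x'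
    proof -
      obtain l1 where l1: "l1 > 0" "\<forall>t\<in>{0..l1}. x + t *\<^sub>R x' \<in> A"
        using x unfolding acore_def by blast
      obtain l2 where l2: "l2 > 0" "\<forall>t\<in>{0..l2}. x + t *\<^sub>R x' \<in> B"
        using x unfolding acore_def by blast
      show ?thesis using l1 l2
        by (intro exI[of _ "min l1 l2"]) auto
    qed
    then show "x \<in> acore (A \<inter> B)" using x unfolding acore_def by auto
  qed
qed

lemma core_basic_Int: "core_basic A \<Longrightarrow> core_basic B \<Longrightarrow> core_basic (A \<inter> B)"
  unfolding core_basic_def using acore_Int convex_Int by metis

lemma core_open_Int:
  assumes "core_open S" "core_open T" shows "core_open (S \<inter> T)"
proof -
  obtain F where F: "\<forall>B\<in>F. core_basic B" "S = \<Union>F"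
    using assms(1) unfolding core_open_def by blast
  obtain G where G: "\<forall>B\<in>G. core_basic B" "T = \<Union>G"
    using assms(2) unfolding core_open_def by blast
  define H where "H = (\<lambda>(A, B). A \<inter> B) ` (F \<times> G)"
  have "\<forall>C\<in>H. core_basic C" unfolding H_def using F(1) G(1) core_basic_Int by auto
  moreover have "S \<inter> T = \<Union>H" unfolding H_def F(2) G(2) by auto
  ultimately show ?thesis unfolding core_open_def by blast
qed

lemma core_open_Union:
  assumes "\<forall>S\<in>K. core_open S" shows "core_open (\<Union>K)"
proof -
  have "\<forall>S\<in>K. \<exists>F. (\<forall>B\<in>F. core_basic B) \<and> S = \<Union>F"
    using assms unfolding core_open_def by blast
  then obtain f where f: "\<And>S. S \<in> K \<Longrightarrow> (\<forall>B\<in>f S. core_basic B) \<and> S = \<Union>(f S)"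
    by metis
  have "\<forall>B\<in>\<Union>(f ` K). core_basic B" using f by auto
  moreover have "\<Union>K = \<Union>(\<Union>(f ` K))"
  proof
    show "\<Union>K \<subseteq> \<Union>(\<Union>(f ` K))"
    proof
      fix x assume "x \<in> \<Union>K"
      then obtain S where "S \<in> K" "x \<in> S" by blast
      moreover have "S = \<Union>(f S)" using f[of S] \<open>S \<in> K\<close> by blast
      ultimately show "x \<in> \<Union>(\<Union>(f ` K))" by blast
    qed
    show "\<Union>(\<Union>(f ` K)) \<subseteq> \<Union>K"
    proof
      fix x assume "x \<in> \<Union>(\<Union>(f ` K))"
      then obtain S B where "S \<in> K" "B \<in> f S" "x \<in> B" by blast
      then show "x \<in> \<Union>K" using f[of S] by auto
    qed
  qed
  ultimately show ?thesis unfolding core_open_def by blast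
qed

lemma istopology_core_open: "istopology core_open"
  unfolding istopology_def using core_open_Int core_open_Union by blast

definition core_topology :: "'a::real_vector topology" where
  "core_topology = topology core_open"

lemma openin_core_topology: "openin core_topology U \<longleftrightarrow> core_open U"
  unfolding core_topology_def using istopology_core_open topology_inverse' by metis

definition core_bounded :: "'a::real_vector set \<Rightarrow> bool" where
  "core_bounded A \<longleftrightarrow>
     (\<forall>U. (\<exists>V. openin core_topology V \<and> 0 \<in> V \<and> V \<subseteq> U) \<longrightarrow>
          (\<exists>s>0. \<forall>t>s. A \<subseteq> (\<lambda>x. t *\<^sub>R x) ` U))"

end

theory Submission imports Defs begin

lemma core_basic_UNIV: "core_basic (UNIV::'a::real_vector set)"
  unfolding core_basic_def acore_def by (auto intro: exI[of _ 1])

lemma topspace_core: "topspace (core_topology::'a::real_vector topology) = UNIV"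
proof -
  have "openin core_topology (UNIV::'a set)"
    unfolding openin_core_topology core_open_def using core_basic_UNIV
    by (intro exI[of _ "{UNIV}"]) auto
  then show ?thesis using openin_subset by blast
qed

lemma core_basic_lin:
  fixes f :: "'a::real_vector \<Rightarrow> real"
  assumes f: "linear f" shows "core_basic {x. f x < c}"
  unfolding core_basic_def
proof
  show "convex {x. f x < c}"
    unfolding convex_def
  proof (intro ballI allI impI, simp)
    fix x y and u v :: real assume a: "f x < c" "f y < c" "0 \<le> u" "0 \<le> v" "u + v = 1"
    have "f (u *\<^sub>R x + v *\<^sub>R y) = u * f x + v * f y"
      using f by (simp add: linear_add linear_scale)
    also have "\<dots> < c"
    proof (cases "u = 0")
      case True then show ?thesis using a by simp
    next
      case False
      then have "u * f x < u * c" using a by simp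
      moreover have "v * f y \<le> v * c" using a by (simp add: mult_left_mono)
      moreover have "u * c + v * c = c" using a(5) by (metis distrib_right mult_1)
      ultimately show ?thesis by linarith
    qed
    finally show "f (u *\<^sub>R x + v *\<^sub>R y) < c" .
  qed
  show "acore {x. f x < c} = {x. f x < c}"
  proof
    show "acore {x. f x < c} \<subseteq> {x. f x < c}" unfolding acore_def by auto
    show "{x. f x < c} \<subseteq> acore {x. f x < c}"
    proof
      fix x assume x: "x \<in> {x. f x < c}"
      have "\<exists>l>0. \<forall>t\<in>{0..l}. x + t *\<^sub>R x' \<in> {x. f x < c}" for x'
      proof (intro exI[of _ "(c - f x) / (\<bar>f x'\<bar> + 1)"] conjI ballI)
        show "(c - f x) / (\<bar>f x'\<bar> + 1) > 0" using x by simp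
        fix t assume t: "t \<in> {0..(c - f x) / (\<bar>f x'\<bar> + 1)}"
        have "t * (\<bar>f x'\<bar> + 1) \<le> c - f x"
          using t by (simp add: pos_le_divide_eq)
        moreover have "t * f x' \<le> t * \<bar>f x'\<bar>" using t by (simp add: mult_left_mono)
        moreover have "t * (\<bar>f x'\<bar> + 1) = t * \<bar>f x'\<bar> + t" by (simp add: algebra_simps)
        ultimately have "f x + t * f x' \<le> c - t" by linarith
        moreover have "t = 0 \<or> t > 0" using t by auto
        ultimately have "f x + t * f x' < c" using x by auto
        then show "x + t *\<^sub>R x' \<in> {x. f x < c}" using f by (simp add: linear_add linear_scale)
      qed
      then show "x \<in> acore {x. f x < c}" using x unfolding acore_def by blast
    qed
  qed
qed

lemma open_lin:
  fixes f :: "'a::real_vector \<Rightarrow> real"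
  assumes "linear f" shows "openin core_topology {x. f x < c}"
  unfolding openin_core_topology core_open_def using core_basic_lin[OF assms]
  by (intro exI[of _ "{{x. f x < c}}"]) auto

lemma compact_lin_bounded:
  fixes f :: "'a::real_vector \<Rightarrow> real"
  assumes K: "compactin core_topology K" and f: "linear f"
  shows "\<exists>M. \<forall>x\<in>K. f x \<le> M"
proof -
  define U where "U = range (\<lambda>n::nat. {x. f x < real n})"
  have "\<forall>B\<in>U. openin core_topology B" unfolding U_def using open_lin[OF f] by auto
  moreover have "K \<subseteq> \<Union>U" unfolding U_def using reals_Archimedean2 by blast
  ultimately obtain F where F: "finite F" "F \<subseteq> U" "K \<subseteq> \<Union>F"
    using K unfolding compactin_def by meson
  then obtain N where N: "finite N" "F = (\<lambda>n::nat. {x. f x < real n}) ` N"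
    unfolding U_def using finite_subset_image by (metis subset_UNIV)
  show ?thesis
  proof (intro exI[of _ "real (Max (insert 0 N))"] ballI)
    fix x assume "x \<in> K"
    then obtain n where n: "n \<in> N" "f x < real n" using F N by auto
    have "n \<le> Max (insert 0 N)" using N n by simp
    then show "f x \<le> real (Max (insert 0 N))" using n by linarith
  qed
qed

lemma bounded_lin_bounded:
  fixes f :: "'a::real_vector \<Rightarrow> real"
  assumes A: "core_bounded A" and f: "linear f"
  shows "\<exists>M. \<forall>x\<in>A. \<bar>f x\<bar> \<le> M"
proof -
  define U where "U = {x. f x < 1} \<inter> {x. (\<lambda>x. - f x) x < 1}"
  have lf: "linear (\<lambda>x. - f x)" using f by (simp add: linear_compose_neg)
  have "openin core_topology U" unfolding U_def
    using open_lin[OF f] open_lin[OF lf] by blast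
  moreover have "0 \<in> U" unfolding U_def using f by (simp add: linear_0)
  ultimately obtain s where s: "s > 0" "\<forall>t>s. A \<subseteq> (\<lambda>x. t *\<^sub>R x) ` U"
    using A unfolding core_bounded_def by blast
  have sub: "A \<subseteq> (\<lambda>x. (s+1) *\<^sub>R x) ` U" using s by simp
  show ?thesis
  proof (intro exI[of _ "s+1"] ballI)
    fix x assume "x \<in> A"
    then obtain u where u: "u \<in> U" "x = (s+1) *\<^sub>R u" using sub by blast
    have "\<bar>f u\<bar> < 1" using u unfolding U_def by auto
    moreover have "f x = (s+1) * f u" using u f by (simp add: linear_scale)
    ultimately show "\<bar>f x\<bar> \<le> s + 1" using s by (simp add: abs_mult)
  qed
qed

lemma findim:
  fixes K :: "'a::real_vector set"
  assumes H: "\<And>f. linear f \<Longrightarrow> \<exists>M. \<forall>x\<in>K. (f x::real) \<le> M"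
  shows "\<exists>B. finite B \<and> B \<subseteq> K \<and> independent B \<and> K \<subseteq> span B"
proof -
  obtain B where B: "B \<subseteq> K" "independent B" "K \<subseteq> span B"
    using maximal_independent_subset by blast
  have "finite B"
  proof (rule ccontr)
    assume "infinite B"
    then obtain h :: "nat \<Rightarrow> 'a" where h: "inj h" "range h \<subseteq> B"
      using infinite_countable_subset by blast
    obtain g where g: "linear g"
      "\<forall>x\<in>B. g x = (if x \<in> range h then real (inv h x) else 0)"
      using linear_independent_extend[OF B(2), of "\<lambda>x. if x \<in> range h then real (inv h x) else 0"] by blast
    obtain M where M: "\<forall>x\<in>K. g x \<le> M" using H[OF g(1)] by blast
    obtain n :: nat where n: "M < real n" using reals_Archimedean2 by blast
    have hn: "h n \<in> B" using h by auto
    have "g (h n) = real (inv h (h n))" using g(2) hn by simp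
    then have "g (h n) = real n" using inv_f_f[OF h(1)] by simp
    moreover have "h n \<in> K" using h B by auto
    ultimately have "real n \<le> M" using M by metis
    then show False using n by simp
  qed
  then show ?thesis using B by blast
qed

lemma convex_core_nbhd:
  fixes V :: "'a::real_vector set"
  assumes V: "convex V" and p: "p \<in> acore V" and B: "finite B"
  shows "\<exists>e>0. \<forall>d. (\<forall>b\<in>B. \<bar>d b\<bar> < e) \<longrightarrow> p + (\<Sum>b\<in>B. d b *\<^sub>R b) \<in> V"
  using B
proof (induction B rule: finite_induct)
  case empty
  then show ?case using p unfolding acore_def by (auto intro: exI[of _ 1])
next
  case (insert a B)
  obtain e1 where e1: "e1 > 0" "\<forall>d. (\<forall>b\<in>B. \<bar>d b\<bar> < e1) \<longrightarrow> p + (\<Sum>b\<in>B. d b *\<^sub>R b) \<in> V"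
    using insert.IH by blast
  obtain l1 where l1: "l1 > 0" "\<forall>t\<in>{0..l1}. p + t *\<^sub>R a \<in> V"
    using p unfolding acore_def by blast
  obtain l2 where l2: "l2 > 0" "\<forall>t\<in>{0..l2}. p + t *\<^sub>R (-a) \<in> V"
    using p unfolding acore_def by blast
  define l where "l = min l1 l2"
  have la: "p + s *\<^sub>R a \<in> V" if "\<bar>s\<bar> \<le> l" for s
  proof (cases "s \<ge> 0")
    case True then show ?thesis using l1 that unfolding l_def by auto
  next
    case False
    then have "-s \<in> {0..l2}" using that unfolding l_def by auto
    then show ?thesis using l2 by fastforce
  qed
  show ?case
  proof (intro exI[of _ "min (l/2) (e1/2)"] conjI allI impI)
    show "min (l/2) (e1/2) > 0" using l1 l2 e1 unfolding l_def by auto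
    fix d assume d: "\<forall>b\<in>insert a B. \<bar>d b\<bar> < min (l/2) (e1/2)"
    have "p + (2 * d a) *\<^sub>R a \<in> V" using d by (intro la) auto
    moreover have "p + (\<Sum>b\<in>B. (2 * d b) *\<^sub>R b) \<in> V" using d by (intro e1(2)[rule_format]) (auto simp: abs_mult)
    ultimately have "(1/2) *\<^sub>R (p + (2 * d a) *\<^sub>R a) + (1/2) *\<^sub>R (p + (\<Sum>b\<in>B. (2 * d b) *\<^sub>R b)) \<in> V"
      by (intro convexD[OF V]) auto
    moreover have "(1/2) *\<^sub>R (p + (2 * d a) *\<^sub>R a) + (1/2) *\<^sub>R (p + (\<Sum>b\<in>B. (2 * d b) *\<^sub>R b))
        = p + (d a *\<^sub>R a + (\<Sum>b\<in>B. d b *\<^sub>R b))"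
    proof -
      have h: "(1/2::real) *\<^sub>R p + (1/2) *\<^sub>R p = p" by (simp flip: scaleR_add_left)
      show ?thesis by (simp add: scaleR_sum_right algebra_simps h)
    qed
    ultimately show "p + (\<Sum>b\<in>insert a B. d b *\<^sub>R b) \<in> V" using insert.hyps by simp
  qed
qed

lemma cont_L:
  fixes B :: "'a::real_vector set"
  assumes B: "finite B"
  shows "continuous_map (product_topology (\<lambda>_. euclideanreal) B) core_topology (\<lambda>c. \<Sum>b\<in>B. c b *\<^sub>R b)"
  unfolding continuous_map_def topspace_core
proof (intro conjI allI impI)
  show "(\<lambda>c. \<Sum>b\<in>B. c b *\<^sub>R b) \<in> topspace (product_topology (\<lambda>_. euclideanreal) B) \<rightarrow> UNIV" by simp
  fix U :: "'a set" assume U: "openin core_topology U"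
  let ?P = "product_topology (\<lambda>_::'a. euclideanreal) B"
  show "openin ?P {x \<in> topspace ?P. (\<Sum>b\<in>B. x b *\<^sub>R b) \<in> U}"
  proof (subst openin_subopen, intro ballI)
    fix c assume c: "c \<in> {x \<in> topspace ?P. (\<Sum>b\<in>B. x b *\<^sub>R b) \<in> U}"
    obtain F where F: "\<forall>B\<in>F. core_basic B" "U = \<Union>F"
      using U unfolding openin_core_topology core_open_def by blast
    then obtain V where V: "V \<in> F" "(\<Sum>b\<in>B. c b *\<^sub>R b) \<in> V" using c by auto
    have cb: "core_basic V" using F V by auto
    then obtain e where e: "e > 0"
      "\<forall>d. (\<forall>b\<in>B. \<bar>d b\<bar> < e) \<longrightarrow> (\<Sum>b\<in>B. c b *\<^sub>R b) + (\<Sum>b\<in>B. d b *\<^sub>R b) \<in> V"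
      using convex_core_nbhd[of V "\<Sum>b\<in>B. c b *\<^sub>R b" B] B V unfolding core_basic_def by auto
    define T where "T = PiE B (\<lambda>b. ball (c b) e)"
    have "openin ?P T" unfolding T_def openin_PiE_gen using B by auto
    moreover have "c \<in> T" unfolding T_def using c e by (auto simp: PiE_iff)
    moreover have "T \<subseteq> {x \<in> topspace ?P. (\<Sum>b\<in>B. x b *\<^sub>R b) \<in> U}"
    proof
      fix c' assume c': "c' \<in> T"
      then have "c' \<in> topspace ?P" unfolding T_def by (auto simp: PiE_iff)
      moreover have "(\<Sum>b\<in>B. c' b *\<^sub>R b) = (\<Sum>b\<in>B. c b *\<^sub>R b) + (\<Sum>b\<in>B. (c' b - c b) *\<^sub>R b)"
        by (simp add: sum.distrib[symmetric] scaleR_diff_left)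
      moreover have "\<forall>b\<in>B. \<bar>c' b - c b\<bar> < e" using c' unfolding T_def by (auto simp: PiE_iff dist_real_def abs_minus_commute)
      ultimately show "c' \<in> {x \<in> topspace ?P. (\<Sum>b\<in>B. x b *\<^sub>R b) \<in> U}"
        using e(2)[rule_format, of "\<lambda>b. c' b - c b"] V F by auto
    qed
    ultimately show "\<exists>T. openin ?P T \<and> c \<in> T \<and> T \<subseteq> {x \<in> topspace ?P. (\<Sum>b\<in>B. x b *\<^sub>R b) \<in> U}"
      by blast
  qed
qed


theorem theorem3p16:
  fixes A K :: "'a::real_vector set"
  shows "(closedin core_topology A \<and> core_bounded A \<longrightarrow> compactin core_topology A)
     \<and> (compactin core_topology K \<longrightarrow> (\<exists>B. finite B \<and> K \<subseteq> span B))"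
proof (intro conjI impI)
  assume "compactin core_topology K"
  then show "\<exists>B. finite B \<and> K \<subseteq> span B"
    using findim[of K] compact_lin_bounded by blast
next
  assume asm: "closedin core_topology A \<and> core_bounded A"
  then have Acl: "closedin core_topology A" and Abd: "core_bounded A" by auto
  have "\<exists>M. \<forall>x\<in>A. f x \<le> M" if lf: "linear f" for f :: "'a \<Rightarrow> real"
  proof -
    obtain M where "\<forall>x\<in>A. \<bar>f x\<bar> \<le> M" using bounded_lin_bounded[OF Abd lf] by blast
    then show ?thesis by (meson abs_ge_self order_trans)
  qed
  then obtain B where B: "finite B" "B \<subseteq> A" "independent B" "A \<subseteq> span B"
    using findim[of A] by blast
  have "\<exists>f. linear f \<and> (\<forall>b'\<in>B. f b' = (if b' = b then 1 else (0::real)))" for b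
    using linear_independent_extend[OF B(3), of "\<lambda>b'. if b' = b then 1 else (0::real)"] by simp
  then obtain fc where fc0: "\<forall>b. linear (fc b) \<and> (\<forall>b'\<in>B. fc b b' = (if b' = b then 1 else (0::real)))"
    using choice[of "\<lambda>b f. linear f \<and> (\<forall>b'\<in>B. f b' = (if b' = b then 1 else (0::real)))"] by blast
  then have fc: "\<And>b. linear (fc b)" "\<And>b b'. b' \<in> B \<Longrightarrow> fc b b' = (if b' = b then 1 else 0)"
    by auto
  have rep: "x = (\<Sum>b\<in>B. fc b x *\<^sub>R b)" if x: "x \<in> span B" for x
  proof -
    obtain u where u: "x = (\<Sum>v\<in>B. u v *\<^sub>R v)" using x span_finite[OF B(1)] by blast
    have "fc b x = u b" if b: "b \<in> B" for b
    proof -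
      have "fc b x = (\<Sum>v\<in>B. u v * fc b v)" using u fc(1) by (simp add: linear_sum linear_scale)
      also have "\<dots> = (\<Sum>v\<in>B. (if v = b then u v else 0))" by (rule sum.cong) (auto simp: fc(2))
      also have "\<dots> = u b" using b B(1) by simp
      finally show ?thesis .
    qed
    then show ?thesis using u by (metis (no_types, lifting) sum.cong)
  qed
  have "\<exists>M. \<forall>x\<in>A. \<bar>fc b x\<bar> \<le> M" for b using bounded_lin_bounded[OF Abd fc(1)] .
  then obtain S where S0: "\<forall>b. \<forall>x\<in>A. \<bar>fc b x\<bar> \<le> S b"
    using choice[of "\<lambda>b M. \<forall>x\<in>A. \<bar>fc b x\<bar> \<le> M"] by blast
  then have S: "\<And>b x. x \<in> A \<Longrightarrow> \<bar>fc b x\<bar> \<le> S b" by blast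
  let ?P = "product_topology (\<lambda>_::'a. euclideanreal) B"
  let ?L = "\<lambda>c. \<Sum>b\<in>B. c b *\<^sub>R b"
  define C where "C = PiE B (\<lambda>b. {-S b..S b}) \<inter> {c \<in> topspace ?P. ?L c \<in> A}"
  have cont: "continuous_map ?P core_topology ?L" using cont_L[OF B(1)] .
  have cpt: "compactin ?P (PiE B (\<lambda>b. {-S b..S b}))"
    by (simp add: compactin_PiE)
  have "closedin ?P (PiE B (\<lambda>b. {-S b..S b}))"
    by (simp add: closedin_product_topology closed_closedin[symmetric])
  moreover have "closedin ?P {c \<in> topspace ?P. ?L c \<in> A}"
    using closedin_continuous_map_preimage[OF cont Acl] .
  ultimately have clC: "closedin ?P C" unfolding C_def by (rule closedin_Int)
  have "C \<subseteq> PiE B (\<lambda>b. {-S b..S b})" unfolding C_def by (rule Int_lower1)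
  then have "compactin ?P C" using closed_compactin[OF cpt _ clC] by simp
  then have "compactin core_topology (?L ` C)" by (rule image_compactin[OF _ cont])
  moreover have "?L ` C = A"
  proof
    show "?L ` C \<subseteq> A" unfolding C_def by auto
    show "A \<subseteq> ?L ` C"
    proof
      fix x assume x: "x \<in> A"
      define c where "c = restrict (\<lambda>b. fc b x) B"
      have "c \<in> PiE B (\<lambda>b. {-S b..S b})" unfolding c_def using S[OF x] by (force simp: abs_le_iff)
      moreover have "?L c = x"
      proof -
        have "?L c = (\<Sum>b\<in>B. fc b x *\<^sub>R b)" unfolding c_def by (rule sum.cong) auto
        also have "\<dots> = x" using rep x B(4) by auto
        finally show ?thesis .
      qed
      ultimately have "c \<in> C" unfolding C_def using x by (auto simp: PiE_iff)
      then show "x \<in> ?L ` C" using \<open>?L c = x\<close> by force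
    qed
  qed
  ultimately show "compactin core_topology A" by simp
qed

end
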